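(* Let $m,n$ be positive integers and for each $i\in\{1,\dots,m\}$ let $A^i\in\mathbb{R}^{n_i\times n}$, $b^i\in\mathbb{R}^{n_i}$. Let $A=[(A^1)^T,\dots,(A^m)^T]^T\in\mathbb{R}^{N\times n}$, $N=\sum_in_i\ge n$, assume $A^TA$ is full rank, and let $x^*$ be the unique minimizer of $\sum_{i=1}^m\frac12\|A^ix-b^i\|^2$. Let $\lambda,\gamma$ be the largest and smallest eigenvalues of $A^TA$, fix $\beta>0$, and let $K^*=(A^TA+\beta I)^{-1}$. Algorithm 1 (parameters $\alpha,\delta>0$): choose $x_1(0)=x(0)$ and $K(-1)\in\mathbb{R}^{n\times n}$; for $t\ge0$, with $k_j(t)$ the $j$-th column of $K(t)$ and $e_j$ the $j$-th column of $I$, $k_j(t)=k_j(t-1)-\alpha\sum_{i=1}^m\big[((A^i)^TA^i+\tfrac{\beta}{m}I)k_j(t-1)-\tfrac1m e_j\big]$ for $j=1,\dots,n$, and $x_1(t+1)=x_1(t)-\delta K(t)\sum_{i=1}^m(A^i)^T(A^ix_1(t)-b^i)$. DGD (step size $\delta'>0$): $x_2(0)=x(0)$ and $x_2(t+1)=x_2(t)-\delta'\sum_{i=1}^m(A^i)^T(A^ix_2(t)-b^i)$. Let $\rho_{GD}=\dfrac{\lambda/\gamma-1}{\lambda/\gamma+1}$, $\rho_K^*=\dfrac{\lambda-\gamma}{\lambda+\gamma+2\beta}$, $\rho_\beta^*=\dfrac{(\lambda-\gamma)\beta}{(\lambda+\gamma)\beta+2\lambda\gamma}$, $\sigma_0=\delta\lambda\|K(-1)-K^*\|_F$,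 and consider the known upper bounds $\|x_1(t)-x^*\|\le E_1(t)$ and $\|x_2(t)-x^*\|\le E_2(t)$, where $$E_1(t)=\prod_{k=0}^{t-1}\big(\rho_\beta^*+\sigma_0(\rho_K^* )^{k+1}\big)\,\|x(0)-x^*\|,\qquad E_2(t)=\rho_{GD}^{\,t}\,\|x(0)-x^*\|,$$ with the parameters $\alpha,\delta,\delta'$ chosen so that these bounds hold (the rates $\rho_K^*$, $\rho_\beta^*$, $\rho_{GD}$ being the optimal rates of the respective iterations). Then there exists $t_{sw}<\infty$ such that $E_1(t)<E_2(t)$ for all $t>t_{sw}$.
   Context: $\|\cdot\|$ is the Euclidean norm and $\|\cdot\|_F$ the Frobenius norm. Both algorithms start from the same initial estimate $x(0)\in\mathbb{R}^n$. *)

theory Defs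
  imports "Jordan_Normal_Form.Char_Poly"
begin

definition vsum :: "nat \<Rightarrow> ('i \<Rightarrow> real vec) \<Rightarrow> 'i set \<Rightarrow> real vec" where
  "vsum n F I = vec n (\<lambda>r. \<Sum>i\<in>I. F i $ r)"

definition vnorm :: "real vec \<Rightarrow> real" where
  "vnorm v = sqrt (v \<bullet> v)"

definition frob :: "real mat \<Rightarrow> real" where
  "frob M = sqrt (\<Sum>r<dim_row M. \<Sum>c<dim_col M. (M $$ (r,c))\<^sup>2)"

fun stack :: "nat \<Rightarrow> nat \<Rightarrow> (nat \<Rightarrow> real mat) \<Rightarrow> real mat" where
  "stack 0 n As = 0\<^sub>m 0 n"
| "stack (Suc m) n As = stack m n As @\<^sub>r As m"

end

theory Submission
  imports Defs
begin


lemma sp_self_nonneg: "(v::real vec) \<bullet> v \<ge> 0"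
  unfolding scalar_prod_def by (intro sum_nonneg) simp

lemma sp_self_zero: assumes "(v::real vec) \<bullet> v = 0" shows "v = 0\<^sub>v (dim_vec v)"
proof -
  have z: "(\<Sum>i\<in>{0..<dim_vec v}. v $ i * v $ i) = 0"
    using assms unfolding scalar_prod_def by simp
  have "\<forall>i\<in>{0..<dim_vec v}. v $ i * v $ i = 0"
    using iffD1[OF sum_nonneg_eq_0_iff z] by simp
  then show ?thesis by (intro eq_vecI) simp_all
qed

lemma mat_vec_zero_right: assumes "(A::real mat) \<in> carrier_mat nr nc" shows "A *\<^sub>v 0\<^sub>v nc = 0\<^sub>v nr"
proof (intro eq_vecI)
  fix i assume "i < dim_vec (0\<^sub>v nr :: real vec)"
  then have i: "i < nr" by simp
  have "row A i \<in> carrier_vec nc" using assms by auto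
  then show "(A *\<^sub>v 0\<^sub>v nc) $ i = 0\<^sub>v nr $ i" using i assms by (simp add: mult_mat_vec_def)
qed (use assms in simp)

lemma gam_pos:
  fixes AA :: "real mat"
  assumes inv: "invertible_mat (transpose_mat AA * AA)"
    and ev: "eigenvalue (transpose_mat AA * AA) g"
  shows "g > 0"
proof -
  define M where "M = transpose_mat AA * AA"
  define nr where "nr = dim_row AA"
  define nc where "nc = dim_col AA"
  have AA: "AA \<in> carrier_mat nr nc" unfolding nr_def nc_def by auto
  have AT: "transpose_mat AA \<in> carrier_mat nc nr" using AA by simp
  have M: "M \<in> carrier_mat nc nc" unfolding M_def nc_def by auto
  obtain v where ev': "eigenvector M v g" using ev unfolding eigenvalue_def M_def by blast
  have dM: "dim_row M = nc" using M by simp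
  have v: "v \<in> carrier_vec nc" "v \<noteq> 0\<^sub>v nc" "M *\<^sub>v v = g \<cdot>\<^sub>v v"
    using ev' unfolding eigenvector_def dM by blast+
  define w where "w = AA *\<^sub>v v"
  have w: "w \<in> carrier_vec nr" unfolding w_def using mult_mat_vec_carrier[OF AA v(1)] .
  have Mv: "M *\<^sub>v v = transpose_mat AA *\<^sub>v w"
    unfolding M_def w_def by (rule assoc_mult_mat_vec[OF AT AA v(1)])
  have "(M *\<^sub>v v) \<bullet> v = w \<bullet> w"
    unfolding Mv using transpose_vec_mult_scalar[OF AA v(1) w] unfolding w_def .
  moreover have "(M *\<^sub>v v) \<bullet> v = g * (v \<bullet> v)" unfolding v(3)
    by (rule smult_scalar_prod_distrib[OF v(1) v(1)])
  ultimately have eq: "g * (v \<bullet> v) = w \<bullet> w" by simp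
  have vpos: "v \<bullet> v > 0"
  proof -
    have dv: "dim_vec v = nc" using v(1) by simp
    have "v \<bullet> v \<noteq> 0" using sp_self_zero[of v] v(2) unfolding dv by blast
    thus ?thesis using sp_self_nonneg[of v] by linarith
  qed
  have "g \<noteq> 0"
  proof
    assume "g = 0"
    then have "w \<bullet> w = 0" using eq by simp
    then have "w = 0\<^sub>v nr" using sp_self_zero[of w] w by simp
    then have Mv0: "M *\<^sub>v v = 0\<^sub>v nc" unfolding Mv using mat_vec_zero_right[OF AT] by simp
    obtain B where B: "inverts_mat B M" "inverts_mat M B"
      using inv unfolding invertible_mat_def M_def by blast
    have BM: "B * M = 1\<^sub>m (dim_row B)" using B(1) unfolding inverts_mat_def .
    have MB: "M * B = 1\<^sub>m (dim_row M)" using B(2) unfolding inverts_mat_def .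
    have dB: "dim_col B = nc"
    proof -
      have "dim_col (M * B) = dim_row M" using MB by simp
      then show ?thesis using M by simp
    qed
    have dB2: "dim_row B = nc"
    proof -
      have "dim_col (B * M) = dim_row B" using BM by simp
      then show ?thesis using M by simp
    qed
    have Bc: "B \<in> carrier_mat nc nc" using dB dB2 by auto
    have "v = 1\<^sub>m nc *\<^sub>v v" using v(1) by simp
    also have "\<dots> = (B * M) *\<^sub>v v" using BM dB2 by simp
    also have "\<dots> = B *\<^sub>v (M *\<^sub>v v)" by (rule assoc_mult_mat_vec[OF Bc M v(1)])
    also have "\<dots> = 0\<^sub>v nc" unfolding Mv0 by (rule mat_vec_zero_right[OF Bc])
    finally show False using v(2) by simp
  qed
  moreover have "g \<ge> 0"
  proof (rule ccontr)
    assume "\<not> g \<ge> 0"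
    then have "g * (v \<bullet> v) < 0" using vpos by (simp add: mult_neg_pos)
    then show False using eq sp_self_nonneg[of w] by linarith
  qed
  ultimately show ?thesis by simp
qed


lemma main_asym:
  fixes rB rG rK s c :: real
  assumes rB: "0 < rB" "rB < rG" and rK: "0 \<le> rK" "rK < 1" and s: "0 \<le> s" and c: "0 < c"
  shows "\<exists>N::nat. \<forall>t>N. (\<Prod>k<t. rB + s * rK ^ (k + 1)) * c < rG ^ t * c"
proof -
  have rG: "rG > 0" using rB by linarith
  define q where "q k = (rB + s * rK ^ (k + 1)) / rG" for k :: nat
  define u where "u t = (\<Prod>k<t. q k)" for t :: nat
  have q_nn: "q k \<ge> 0" for k unfolding q_def using rB rK s rG by (intro divide_nonneg_pos) auto
  have u_nn: "u t \<ge> 0" for t unfolding u_def using q_nn by (intro prod_nonneg) auto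
  have prod_eq: "(\<Prod>k<t. rB + s * rK ^ (k + 1)) = u t * rG ^ t" for t
  proof (induction t)
    case 0 then show ?case by (simp add: u_def)
  next
    case (Suc t)
    have "(\<Prod>k<Suc t. rB + s * rK ^ (k + 1)) = (\<Prod>k<t. rB + s * rK ^ (k + 1)) * (rB + s * rK ^ (t + 1))"
      by simp
    also have "\<dots> = u t * rG ^ t * (q t * rG)" unfolding Suc q_def using rG by simp
    also have "\<dots> = u (Suc t) * rG ^ Suc t" unfolding u_def by (simp add: ac_simps)
    finally show ?case .
  qed
  have "(\<lambda>k. rK ^ k) \<longlonglongrightarrow> 0" using rK by (intro LIMSEQ_power_zero) auto
  then have "(\<lambda>k. rK ^ Suc k) \<longlonglongrightarrow> 0" by (rule LIMSEQ_Suc)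
  then have "(\<lambda>k. (rB + s * rK ^ Suc k) / rG) \<longlonglongrightarrow> (rB + s * 0) / rG"
    by (intro tendsto_intros) (use rG in auto)
  then have qlim: "q \<longlonglongrightarrow> rB / rG" unfolding q_def by simp
  define r where "r = rB / rG"
  define c0 where "c0 = (1 + r) / 2"
  have rBG: "r < 1" using rB rG unfolding r_def by simp
  have c01: "r < c0" unfolding c0_def using rBG by (simp add: field_simps)
  have c02: "c0 < 1" unfolding c0_def using rBG by (simp add: field_simps)
  note c0' = c01 c02
  have c0: "rB / rG < c0" "c0 < 1" using c0' unfolding r_def by auto
  have "eventually (\<lambda>k. q k < c0) sequentially" by (rule order_tendstoD(2)[OF qlim c0(1)])
  then obtain N where N: "\<And>k. k \<ge> N \<Longrightarrow> q k < c0" unfolding eventually_sequentially by blast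
  have "summable u"
  proof (rule summable_ratio_test[OF c0(2)])
    fix n assume "n \<ge> N"
    then have "q n \<le> c0" using N by (simp add: less_imp_le)
    then have "q n * u n \<le> c0 * u n" using u_nn by (intro mult_right_mono) auto
    moreover have "u (Suc n) = q n * u n" unfolding u_def by (simp add: ac_simps)
    ultimately show "norm (u (Suc n)) \<le> c0 * norm (u n)" using u_nn q_nn by simp
  qed
  then have "u \<longlonglongrightarrow> 0" by (rule summable_LIMSEQ_zero)
  then have "eventually (\<lambda>t. u t < 1) sequentially" by (rule order_tendstoD(2)) simp
  then obtain N2 where N2: "\<And>t. t \<ge> N2 \<Longrightarrow> u t < 1" unfolding eventually_sequentially by blast
  show ?thesis
  proof (intro exI allI impI)
    fix t assume "t > N2"
    then have "u t < 1" using N2 by simp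
    then have "u t * rG ^ t < 1 * rG ^ t" using rG by (intro mult_strict_right_mono) auto
    then show "(\<Prod>k<t. rB + s * rK ^ (k + 1)) * c < rG ^ t * c"
      unfolding prod_eq using c by (intro mult_strict_right_mono) simp_all
  qed
qed
theorem theorem1:
  fixes m n :: nat
    and ns :: "nat \<Rightarrow> nat"
    and As :: "nat \<Rightarrow> real mat" and bs :: "nat \<Rightarrow> real vec"
    and xs x0 :: "real vec"
    and lam gam beta alpha delta delta' :: real
    and Kstar Km1 :: "real mat"
    and K :: "nat \<Rightarrow> real mat"
    and x1 x2 :: "nat \<Rightarrow> real vec"
  defines "AA \<equiv> stack m n As"
  defines "f \<equiv> (\<lambda>x. \<Sum>i<m. 1/2 * (vnorm (As i *\<^sub>v x - bs i))\<^sup>2)"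
  defines "rhoGD \<equiv> (lam / gam - 1) / (lam / gam + 1)"
  defines "rhoK \<equiv> (lam - gam) / (lam + gam + 2 * beta)"
  defines "rhoB \<equiv> ((lam - gam) * beta) / ((lam + gam) * beta + 2 * lam * gam)"
  defines "sigma0 \<equiv> delta * lam * frob (Km1 - Kstar)"
  defines "E1 \<equiv> (\<lambda>t::nat. (\<Prod>k<t. rhoB + sigma0 * rhoK ^ (k + 1)) * vnorm (x0 - xs))"
  defines "E2 \<equiv> (\<lambda>t::nat. rhoGD ^ t * vnorm (x0 - xs))"
  assumes "m > 0" and "n > 0"
    and blocks: "\<forall>i<m. As i \<in> carrier_mat (ns i) n \<and> bs i \<in> carrier_vec (ns i)"
    and "(\<Sum>i<m. ns i) \<ge> n"
    and fullrank: "invertible_mat (transpose_mat AA * AA)"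
    and xs_min: "xs \<in> carrier_vec n" "\<forall>y\<in>carrier_vec n. f xs \<le> f y"
    and xs_unique: "\<forall>y\<in>carrier_vec n. f y \<le> f xs \<longrightarrow> y = xs"
    and lam_max: "eigenvalue (transpose_mat AA * AA) lam"
        "\<forall>k. eigenvalue (transpose_mat AA * AA) k \<longrightarrow> k \<le> lam"
    and gam_min: "eigenvalue (transpose_mat AA * AA) gam"
        "\<forall>k. eigenvalue (transpose_mat AA * AA) k \<longrightarrow> gam \<le> k"
    and "beta > 0"
    and Kstar: "Kstar \<in> carrier_mat n n"
        "inverts_mat Kstar (transpose_mat AA * AA + beta \<cdot>\<^sub>m 1\<^sub>m n)"
        "inverts_mat (transpose_mat AA * AA + beta \<cdot>\<^sub>m 1\<^sub>m n) Kstar"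
    and "alpha > 0" and "delta > 0" and "delta' > 0"
    and x0: "x0 \<in> carrier_vec n"
    and Km1: "Km1 \<in> carrier_mat n n"
    and K_carrier: "\<forall>t. K t \<in> carrier_mat n n"
    and K_iter: "\<forall>t j. j < n \<longrightarrow>
       (let Kp = (if t = 0 then Km1 else K (t - 1)) in
        col (K t) j = col Kp j - alpha \<cdot>\<^sub>v vsum n (\<lambda>i.
          (transpose_mat (As i) * As i + (beta / real m) \<cdot>\<^sub>m 1\<^sub>m n) *\<^sub>v col Kp j
          - (1 / real m) \<cdot>\<^sub>v unit_vec n j) {..<m})"
    and x1_0: "x1 0 = x0"
    and x1_iter: "\<forall>t. x1 (Suc t) = x1 t - delta \<cdot>\<^sub>v (K t *\<^sub>v
        vsum n (\<lambda>i. transpose_mat (As i) *\<^sub>v (As i *\<^sub>v x1 t - bs i)) {..<m})"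
    and x2_0: "x2 0 = x0"
    and x2_iter: "\<forall>t. x2 (Suc t) = x2 t - delta' \<cdot>\<^sub>v
        vsum n (\<lambda>i. transpose_mat (As i) *\<^sub>v (As i *\<^sub>v x2 t - bs i)) {..<m}"
    and bound1: "\<forall>t. vnorm (x1 t - xs) \<le> E1 t"
    and bound2: "\<forall>t. vnorm (x2 t - xs) \<le> E2 t"
    and nondeg_x0: "x0 \<noteq> xs"
    and nondeg_spec: "gam < lam"
  shows "\<exists>tsw::nat. \<forall>t>tsw. E1 t < E2 t"
  proof -
  have gpos: "gam > 0" using gam_pos[OF fullrank[unfolded AA_def] gam_min(1)[unfolded AA_def]] .
  have lg: "gam < lam" by (rule nondeg_spec)
  have lpos: "lam > 0" using gpos lg by linarith
  have bpos: "beta > 0" by fact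
  have rGD: "rhoGD = (lam - gam) / (lam + gam)"
  proof -
    have e1: "lam / gam - 1 = (lam - gam) / gam" using gpos by (simp add: diff_divide_distrib)
    have e2: "lam / gam + 1 = (lam + gam) / gam" using gpos by (simp add: add_divide_distrib)
    have "((lam - gam) / gam) / ((lam + gam) / gam) = (lam - gam) / (lam + gam)"
      using gpos by simp
    then show ?thesis unfolding rhoGD_def e1 e2 .
  qed
  have d1: "(lam + gam) * beta + 2 * lam * gam > 0" using gpos lpos bpos by (intro add_pos_pos) auto
  have rBpos: "rhoB > 0" unfolding rhoB_def using d1 lg bpos by (intro divide_pos_pos) auto
  have rBlt: "rhoB < rhoGD"
  proof -
    have lt: "(lam + gam) * beta < (lam + gam) * beta + 2 * lam * gam" using gpos lpos by simp
    have num: "(lam - gam) * beta > 0" using lg bpos by simp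
    have "((lam - gam) * beta) / ((lam + gam) * beta + 2 * lam * gam)
        < ((lam - gam) * beta) / ((lam + gam) * beta)"
      using lt num gpos lpos bpos d1 lg by (intro divide_strict_left_mono mult_pos_pos) auto
    also have "\<dots> = (lam - gam) / (lam + gam)" using bpos by simp
    finally show ?thesis unfolding rhoB_def rGD .
  qed
  have rK0: "rhoK \<ge> 0" unfolding rhoK_def using lg gpos bpos by (intro divide_nonneg_pos) auto
  have rK1: "rhoK < 1" unfolding rhoK_def using lg gpos bpos by (simp add: divide_less_eq)
  have fr: "frob (Km1 - Kstar) \<ge> 0" unfolding frob_def
    by (intro real_sqrt_ge_zero sum_nonneg) auto
  have s0: "sigma0 \<ge> 0" unfolding sigma0_def
    using \<open>delta > 0\<close> lpos fr by (intro mult_nonneg_nonneg) auto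
  have cpos: "vnorm (x0 - xs) > 0"
  proof -
    define v where "v = x0 - xs"
    have v: "v \<in> carrier_vec n" unfolding v_def using x0 xs_min(1) by simp
    have "v \<noteq> 0\<^sub>v n"
    proof
      assume "v = 0\<^sub>v n"
      then have z: "x0 - xs = 0\<^sub>v n" unfolding v_def .
      have "x0 = xs"
      proof (rule eq_vecI)
        fix i assume "i < dim_vec xs"
        then have i: "i < n" using xs_min(1) by simp
        have "(x0 - xs) $ i = 0" using z i by simp
        then show "x0 $ i = xs $ i" using i x0 xs_min(1) by simp
      qed (use x0 xs_min(1) in simp)
      then show False using nondeg_x0 by simp
    qed
    then have "v \<bullet> v \<noteq> 0" using sp_self_zero[of v] v by auto
    then have "v \<bullet> v > 0" using sp_self_nonneg[of v] by linarith
    then show ?thesis unfolding vnorm_def v_def[symmetric] by simp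
  qed
  obtain N where N: "\<forall>t>N. (\<Prod>k<t. rhoB + sigma0 * rhoK ^ (k + 1)) * vnorm (x0 - xs)
      < rhoGD ^ t * vnorm (x0 - xs)"
    using main_asym[OF rBpos rBlt rK0 rK1 s0 cpos] by blast
  show ?thesis unfolding E1_def E2_def using N by blast
qed

end
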